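(* The abelian group $\ell^\infty(\mathbb{Z})_S$ is divisible: for every $a\in\ell^\infty(\mathbb{Z})$ and every integer $n\ge1$ there exist $b,c\in\ell^\infty(\mathbb{Z})$ with $a-nb=c-Sc$.
   Context: $\ell^\infty(\mathbb{Z})$ denotes the abelian group of bounded integer-valued sequences $(a_j)_{j\in\mathbb{Z}}$, $S(a_j)_j=(a_{j+1})_j$ is the shift, and $\ell^\infty(\mathbb{Z})_S=\ell^\infty(\mathbb{Z})/\{a-Sa: a\in\ell^\infty(\mathbb{Z})\}$. *)

theory Defs
  imports Main
begin

definition linfZ :: "(int \<Rightarrow> int) set" where
  "linfZ = {a. \<exists>M. \<forall>j. \<bar>a j\<bar> \<le> M}"

definition shiftZ :: "(int \<Rightarrow> int) \<Rightarrow> (int \<Rightarrow> int)" where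
  "shiftZ a = (\<lambda>j. a (j + 1))"

end

theory Submission
  imports Defs
begin

lemma psum_step:
  fixes a :: "int \<Rightarrow> int"
  defines "P \<equiv> \<lambda>j. sum a {0..<j} - sum a {j..<0}"
  shows "P (j + 1) = P j + a j"
proof (cases "j \<ge> 0")
  case True
  have "{0..<j+1} = insert j {0..<j}" using True by auto
  moreover have "{j+1..<0} = {}" "{j..<0} = {}" using True by auto
  ultimately show ?thesis unfolding P_def by simp
next
  case False
  have "{0..<j+1} = {}" "{0..<j} = {}" using False by auto
  moreover have "{j..<0} = insert j {j+1..<0}" using False by auto
  ultimately show ?thesis unfolding P_def by simp
qed

theorem lemma5p1:
  fixes a :: "int \<Rightarrow> int" and n :: int
  assumes "a \<in> linfZ" and "n \<ge> 1"
  shows "\<exists>b \<in> linfZ. \<exists>c \<in> linfZ. (\<lambda>j. a j - n * b j) = (\<lambda>j. c j - shiftZ c j)"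
proof -
  obtain M where M: "\<And>j. \<bar>a j\<bar> \<le> M" using assms(1) unfolding linfZ_def by auto
  define P where "P \<equiv> \<lambda>j. sum a {0..<j} - sum a {j..<0}"
  have Pst: "\<And>j. P (j + 1) = P j + a j" unfolding P_def by (rule psum_step)
  define c where "c = (\<lambda>j. (- P j) mod n)"
  define b where "b = (\<lambda>j. (a j - c j + c (j + 1)) div n)"
  have cb: "0 \<le> c j \<and> c j < n" for j unfolding c_def using assms(2) by simp
  have dv: "n dvd (a j - c j + c (j + 1))" for j
  proof -
    have "(a j - c j + c (j + 1)) mod n = (a j - (- P j) + (- P (j+1))) mod n"
      unfolding c_def by (metis (no_types) mod_add_eq mod_diff_eq mod_mod_trivial)
    also have "\<dots> = 0" using Pst[of j] by simp
    finally show ?thesis by (simp add: dvd_eq_mod_eq_0)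
  qed
  have nb: "n * b j = a j - c j + c (j + 1)" for j
    unfolding b_def using dv[of j] by simp
  have "c \<in> linfZ" unfolding linfZ_def using cb by (auto intro!: exI[of _ n] less_imp_le)
  moreover have "b \<in> linfZ" unfolding linfZ_def
  proof (intro CollectI exI allI)
    fix j
    have h: "\<bar>n * b j\<bar> \<le> M + n" using nb[of j] M[of j] cb[of j] cb[of "j+1"] by linarith
    have "\<bar>b j\<bar> \<le> \<bar>n * b j\<bar>" using assms(2)
      by (simp add: abs_mult mult_le_cancel_right1)
    thus "\<bar>b j\<bar> \<le> M + n" using h by linarith
  qed
  moreover have "(\<lambda>j. a j - n * b j) = (\<lambda>j. c j - shiftZ c j)"
    by (rule ext) (simp add: nb shiftZ_def)
  ultimately show ?thesis by blast
qed

end
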